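(* Consider the system \[ \begin{aligned} \dot S_h(t)&=\beta_h-C_{vh}\frac{I_v(t)}{N_v(t)}S_h(t)-\mu_hS_h(t),\\ \dot I_h(t)&=C_{vh}\frac{I_v(t-\tau)}{N_v(t-\tau)}S_h(t-\tau)-\mu_hI_h(t),\\ \dot S_v(t)&=\beta_v-C_{hv}I_h(t)S_v(t)-\mu_vS_v(t),\\ \dot I_v(t)&=C_{hv}I_h(t)S_v(t)-\mu_vI_v(t), \end{aligned} \] with $N_v=S_v+I_v$, positive parameters $\beta_h,\beta_v,\mu_h,\mu_v,C_{vh},C_{hv}$ and $\tau\ge0$. Let $R_0=\sqrt{\dfrac{C_{vh}C_{hv}\beta_h}{\mu_h^2\mu_v}}$. Then the system has a unique endemic equilibrium, i.e. an equilibrium $E^*=(S_h^*,I_h^*,S_v^*,I_v^* )^T$ with all four components positive, if and only if $R_0>1$. *)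

theory Defs
  imports Complex_Main
begin

text \<open>Right-hand side of the delayed system. The state is (S_h, I_h, S_v, I_v).
  The first argument is the current state x(t), the second the delayed state x(t - tau).\<close>
definition host_vector_rhs ::
  "real \<Rightarrow> real \<Rightarrow> real \<Rightarrow> real \<Rightarrow> real \<Rightarrow> real \<Rightarrow>
   real \<times> real \<times> real \<times> real \<Rightarrow> real \<times> real \<times> real \<times> real \<Rightarrow> real \<times> real \<times> real \<times> real"
  where
  "host_vector_rhs \<beta>h \<beta>v \<mu>h \<mu>v Cvh Chv x xd =
     (case x of (Sh, Ih, Sv, Iv) \<Rightarrow> case xd of (Shd, Ihd, Svd, Ivd) \<Rightarrow>
       (\<beta>h - Cvh * (Iv / (Sv + Iv)) * Sh - \<mu>h * Sh,
        Cvh * (Ivd / (Svd + Ivd)) * Shd - \<mu>h * Ih,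
        \<beta>v - Chv * Ih * Sv - \<mu>v * Sv,
        Chv * Ih * Sv - \<mu>v * Iv))"

text \<open>An equilibrium is a constant solution: the state E, used both as current
  and as delayed state, makes the right-hand side vanish (independently of tau).\<close>
definition is_equilibrium ::
  "real \<Rightarrow> real \<Rightarrow> real \<Rightarrow> real \<Rightarrow> real \<Rightarrow> real \<Rightarrow> real \<times> real \<times> real \<times> real \<Rightarrow> bool"
  where
  "is_equilibrium \<beta>h \<beta>v \<mu>h \<mu>v Cvh Chv E \<longleftrightarrow> host_vector_rhs \<beta>h \<beta>v \<mu>h \<mu>v Cvh Chv E E = (0, 0, 0, 0)"

definition is_endemic_equilibrium ::
  "real \<Rightarrow> real \<Rightarrow> real \<Rightarrow> real \<Rightarrow> real \<Rightarrow> real \<Rightarrow> real \<times> real \<times> real \<times> real \<Rightarrow> bool"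
  where
  "is_endemic_equilibrium \<beta>h \<beta>v \<mu>h \<mu>v Cvh Chv E \<longleftrightarrow>
     is_equilibrium \<beta>h \<beta>v \<mu>h \<mu>v Cvh Chv E \<and>
     (case E of (Sh, Ih, Sv, Iv) \<Rightarrow> Sh > 0 \<and> Ih > 0 \<and> Sv > 0 \<and> Iv > 0)"

definition R0 :: "real \<Rightarrow> real \<Rightarrow> real \<Rightarrow> real \<Rightarrow> real \<Rightarrow> real \<Rightarrow> real" where
  "R0 \<beta>h \<beta>v \<mu>h \<mu>v Cvh Chv = sqrt (Cvh * Chv * \<beta>h / (\<mu>h ^ 2 * \<mu>v))"

end

theory Submission
  imports Defs
begin

lemma endemic_char:
  fixes \<beta>h \<beta>v \<mu>h \<mu>v Cvh Chv Sh Ih Sv Iv :: real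
  assumes p: "\<beta>h > 0" "\<beta>v > 0" "\<mu>h > 0" "\<mu>v > 0" "Cvh > 0" "Chv > 0"
  assumes e: "is_endemic_equilibrium \<beta>h \<beta>v \<mu>h \<mu>v Cvh Chv (Sh, Ih, Sv, Iv)"
  shows "Ih * (Chv * (Cvh + \<mu>h)) = Cvh * Chv * \<beta>h / \<mu>h - \<mu>h * \<mu>v"
    and "Sh = \<beta>h / \<mu>h - Ih" and "Sv = \<beta>v / (\<mu>v + Chv * Ih)" and "Iv = \<beta>v / \<mu>v - Sv"
proof -
  from e have pos: "Sh > 0" "Ih > 0" "Sv > 0" "Iv > 0"
    by (auto simp: is_endemic_equilibrium_def)
  from e have h1: "\<beta>h - Cvh * (Iv / (Sv + Iv)) * Sh - \<mu>h * Sh = 0"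
    and h2: "Cvh * (Iv / (Sv + Iv)) * Sh - \<mu>h * Ih = 0"
    and h3: "\<beta>v - Chv * Ih * Sv - \<mu>v * Sv = 0"
    and h4: "Chv * Ih * Sv - \<mu>v * Iv = 0"
    by (auto simp: is_endemic_equilibrium_def is_equilibrium_def host_vector_rhs_def)
  have N: "Sv + Iv = \<beta>v / \<mu>v" using h3 h4 p by (simp add: field_simps)
  then show "Iv = \<beta>v / \<mu>v - Sv" by simp
  have H: "Sh + Ih = \<beta>h / \<mu>h" using h1 h2 p by (simp add: field_simps)
  then show "Sh = \<beta>h / \<mu>h - Ih" by simp
  have mpos: "\<mu>v + Chv * Ih > 0" using p pos by (simp add: add_pos_pos)
  have S: "Sv * (\<mu>v + Chv * Ih) = \<beta>v" using h3 by (simp add: algebra_simps)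
  then show "Sv = \<beta>v / (\<mu>v + Chv * Ih)" using mpos by (simp add: field_simps)
  have Iv: "Iv = Chv * Ih * Sv / \<mu>v" using h4 p by (simp add: field_simps)
  have frac: "Iv / (Sv + Iv) = Chv * Ih / (\<mu>v + Chv * Ih)"
  proof -
    have "Iv / (Sv + Iv) = Chv * Ih * Sv / \<beta>v" unfolding N using Iv p by (simp add: field_simps)
    also have "Sv = \<beta>v / (\<mu>v + Chv * Ih)" using S mpos by (simp add: field_simps)
    then have "Chv * Ih * Sv / \<beta>v = Chv * Ih / (\<mu>v + Chv * Ih)" using p by simp
    finally show ?thesis .
  qed
  have "Cvh * (Chv * Ih / (\<mu>v + Chv * Ih)) * Sh = \<mu>h * Ih" using h2 frac by simp
  then have "Cvh * Chv * Ih * Sh = \<mu>h * Ih * (\<mu>v + Chv * Ih)" using mpos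
    by (simp add: field_simps)
  then have "Cvh * Chv * Sh = \<mu>h * (\<mu>v + Chv * Ih)" using pos
    by (metis (no_types, opaque_lifting) mult.assoc mult.commute mult_left_cancel order_less_irrefl)
  then have "Cvh * Chv * (\<beta>h / \<mu>h - Ih) = \<mu>h * (\<mu>v + Chv * Ih)" using H
    by (metis add_diff_cancel_right')
  then show "Ih * (Chv * (Cvh + \<mu>h)) = Cvh * Chv * \<beta>h / \<mu>h - \<mu>h * \<mu>v"
    by (simp add: algebra_simps)
qed

theorem lemma1:
  fixes \<beta>h \<beta>v \<mu>h \<mu>v Cvh Chv \<tau> :: real
  assumes "\<beta>h > 0" "\<beta>v > 0" "\<mu>h > 0" "\<mu>v > 0" "Cvh > 0" "Chv > 0" "\<tau> \<ge> 0"
  shows "(\<exists>!E. is_endemic_equilibrium \<beta>h \<beta>v \<mu>h \<mu>v Cvh Chv E) \<longleftrightarrow>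
         R0 \<beta>h \<beta>v \<mu>h \<mu>v Cvh Chv > 1"
proof -
  note p = assms(1-6)
  have kpos: "Chv * (Cvh + \<mu>h) > 0" using p by simp
  have R: "R0 \<beta>h \<beta>v \<mu>h \<mu>v Cvh Chv > 1 \<longleftrightarrow> Cvh * Chv * \<beta>h / \<mu>h - \<mu>h * \<mu>v > 0"
  proof -
    have "R0 \<beta>h \<beta>v \<mu>h \<mu>v Cvh Chv > 1 \<longleftrightarrow> Cvh * Chv * \<beta>h / (\<mu>h ^ 2 * \<mu>v) > 1"
      unfolding R0_def by simp
    also have "\<dots> \<longleftrightarrow> Cvh * Chv * \<beta>h > \<mu>h ^ 2 * \<mu>v" using p by (simp add: field_simps)
    also have "\<dots> \<longleftrightarrow> Cvh * Chv * \<beta>h / \<mu>h - \<mu>h * \<mu>v > 0" using p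
      by (simp add: field_simps power2_eq_square)
    finally show ?thesis .
  qed
  define Ih0 where "Ih0 = (Cvh * Chv * \<beta>h / \<mu>h - \<mu>h * \<mu>v) / (Chv * (Cvh + \<mu>h))"
  define E0 where "E0 = (\<beta>h / \<mu>h - Ih0, Ih0, \<beta>v / (\<mu>v + Chv * Ih0), \<beta>v / \<mu>v - \<beta>v / (\<mu>v + Chv * Ih0))"
  have uniq: "E = E0" if "is_endemic_equilibrium \<beta>h \<beta>v \<mu>h \<mu>v Cvh Chv E" for E
  proof -
    obtain Sh Ih Sv Iv where E: "E = (Sh, Ih, Sv, Iv)" by (cases E) auto
    note c = endemic_char[OF p that[unfolded E]]
    have "Ih = Ih0" using c(1) kpos unfolding Ih0_def by (simp add: field_simps)
    then show ?thesis using c unfolding E E0_def by simp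
  qed
  have pos_of: "Cvh * Chv * \<beta>h / \<mu>h - \<mu>h * \<mu>v > 0" if "is_endemic_equilibrium \<beta>h \<beta>v \<mu>h \<mu>v Cvh Chv E" for E
  proof -
    obtain Sh Ih Sv Iv where E: "E = (Sh, Ih, Sv, Iv)" by (cases E) auto
    note c = endemic_char[OF p that[unfolded E]]
    have "Ih > 0" using that E by (simp add: is_endemic_equilibrium_def)
    then have "Ih * (Chv * (Cvh + \<mu>h)) > 0" using kpos by simp
    then show ?thesis using c(1) by simp
  qed
  have ex: "is_endemic_equilibrium \<beta>h \<beta>v \<mu>h \<mu>v Cvh Chv E0" if D: "Cvh * Chv * \<beta>h / \<mu>h - \<mu>h * \<mu>v > 0"
  proof -
    have I: "Ih0 > 0" unfolding Ih0_def using D kpos by simp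
    have Ik: "Ih0 * (Chv * (Cvh + \<mu>h)) = Cvh * Chv * \<beta>h / \<mu>h - \<mu>h * \<mu>v"
      unfolding Ih0_def using kpos by (metis nonzero_eq_divide_eq order_less_irrefl mult.commute)
    define Sh where "Sh = \<beta>h / \<mu>h - Ih0"
    have ShI: "Sh * (Chv * (Cvh + \<mu>h)) = Chv * \<beta>h + \<mu>h * \<mu>v"
      unfolding Sh_def using Ik p by (simp add: field_simps)
    have Sh: "Sh > 0"
    proof -
      have "Sh * (Chv * (Cvh + \<mu>h)) > 0" using ShI p by (simp add: add_pos_pos)
      then show ?thesis using kpos by (simp add: zero_less_mult_iff)
    qed
    have mpos: "\<mu>v + Chv * Ih0 > 0" using p I by (simp add: add_pos_pos)
    define Sv where "Sv = \<beta>v / (\<mu>v + Chv * Ih0)"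
    define Iv where "Iv = \<beta>v / \<mu>v - Sv"
    have Sv: "Sv > 0" unfolding Sv_def using mpos p by simp
    have Iv_eq: "Iv = Chv * Ih0 * Sv / \<mu>v" unfolding Iv_def Sv_def using mpos p
      by (simp add: field_simps)
    have Iv: "Iv > 0" using Iv_eq p I Sv by simp
    have N: "Sv + Iv = \<beta>v / \<mu>v" unfolding Iv_def by simp
    have frac: "Iv / (Sv + Iv) = Chv * Ih0 / (\<mu>v + Chv * Ih0)"
    proof -
      have "Iv / (Sv + Iv) = Chv * Ih0 * Sv / \<beta>v" unfolding N using Iv_eq p by (simp add: field_simps)
      then show ?thesis unfolding Sv_def using p mpos by simp
    qed
    have key: "Cvh * Chv * Sh = \<mu>h * (\<mu>v + Chv * Ih0)"
      unfolding Sh_def using Ik p by (simp add: field_simps)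
    have e2: "Cvh * (Iv / (Sv + Iv)) * Sh = \<mu>h * Ih0"
    proof -
      have "Cvh * (Chv * Ih0 / (\<mu>v + Chv * Ih0)) * Sh = Ih0 * (Cvh * Chv * Sh) / (\<mu>v + Chv * Ih0)"
        by (simp add: algebra_simps)
      also have "\<dots> = \<mu>h * Ih0" unfolding key using mpos by simp
      finally show ?thesis unfolding frac .
    qed
    have e1: "\<beta>h - Cvh * (Iv / (Sv + Iv)) * Sh - \<mu>h * Sh = 0"
      using e2 p unfolding Sh_def by (simp add: field_simps)
    have e3: "\<beta>v - Chv * Ih0 * Sv - \<mu>v * Sv = 0" unfolding Sv_def using mpos
      by (simp add: field_simps)
    have e4: "Chv * Ih0 * Sv - \<mu>v * Iv = 0" using Iv_eq p by simp
    have "E0 = (Sh, Ih0, Sv, Iv)" unfolding E0_def Sh_def Sv_def Iv_def by simp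
    then show ?thesis using e1 e2 e3 e4 Sh I Sv Iv
      by (simp add: is_endemic_equilibrium_def is_equilibrium_def host_vector_rhs_def)
  qed
  show ?thesis
  proof
    assume "\<exists>!E. is_endemic_equilibrium \<beta>h \<beta>v \<mu>h \<mu>v Cvh Chv E"
    then obtain E where "is_endemic_equilibrium \<beta>h \<beta>v \<mu>h \<mu>v Cvh Chv E" by blast
    then show "R0 \<beta>h \<beta>v \<mu>h \<mu>v Cvh Chv > 1" using pos_of R by blast
  next
    assume "R0 \<beta>h \<beta>v \<mu>h \<mu>v Cvh Chv > 1"
    then have "is_endemic_equilibrium \<beta>h \<beta>v \<mu>h \<mu>v Cvh Chv E0" using ex R by blast
    then show "\<exists>!E. is_endemic_equilibrium \<beta>h \<beta>v \<mu>h \<mu>v Cvh Chv E" using uniq by blast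
  qed
qed

end
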